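(* Let $\mathcal{C}$ be an exact-repair regenerating code with parameters $\{(n=d+1,k,d),(\alpha,\beta),B\}$, where $\alpha=(d-p+1)\beta-\theta$ with $p\in\{1,\dots,k\}$, $\theta\in[0,\beta)$ ($\theta=0$ if $p=k$), and let $\epsilon=\hat B-B$. Let $L\subset[k]$ with $|L|=\ell$ and let $m\in[d+1]\setminus L$. Then $$H(S_m^L)\le \beta+(\ell-1)\theta+\ell\epsilon\qquad\text{whenever } 2\le\ell\le p<k,$$ and $$H(S_m^L)\le 2\beta-\theta+\ell\epsilon\qquad\text{whenever } 2\le\ell\le p+1<k.$$
   Context: Setting: fix integers $1\le k\le d$, let $n=d+1$, a finite field $\mathbb{F}_q$, and reals $\alpha,\beta>0$. An exact-repair regenerating code with parameters $\{(n,k,d),(\alpha,\beta),B\}$: a file $M$ uniformly distributed over $\mathbb{F}_q^B$ (entropies are measured in units of $\log q$); node $i\in[n]$ stores $W_i$, a deterministic function of $M$, with $H(W_i)\le\alpha$; (data collection) for every $K\subseteq[n]$ with $|K|=k$, $M$ is a function of $(W_a)_{a\in K}$; (exact repair) since $n=d+1$, the helper set of node $y$ is $[n]\setminus\{y\}$: each $x\ne y$ sends helper data $S_x^y$, a deterministic function of $W_x$ with $H(S_x^y)\le\beta$, and $W_y$ is a function of $(S_x^y)_{x\neq y}$. Notation: $[i]=\{1,\dots,i\}$, $[i\ j]=\{i,i+1,\dots,j\}$; for $A\subseteq[n]$, $W_A=(W_a)_{a\in A}$; for $X,Y\subseteq[n]$, $S_X^Y=\{S_x^y: x\in X, y\in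 Y, x\ne y\}$; $S_x^Y=S_{\{x\}}^Y$. The functional-repair optimal file size is $\hat B=\sum_{i=1}^k\min\{\alpha,(d-i+1)\beta\}=p\alpha+\sum_{i=p+1}^k(d-i+1)\beta$, and $\epsilon:=\hat B-B$. *)

theory Defs
  imports "HOL-Library.FuncSet" "HOL-Library.Cardinality" Complex_Main
begin

definition file_space :: "nat \<Rightarrow> (nat \<Rightarrow> 'f::{finite,field}) set" where
  "file_space B = PiE {..<B} (\<lambda>_. UNIV)"

definition ent :: "real \<Rightarrow> 'a set \<Rightarrow> ('a \<Rightarrow> 'b) \<Rightarrow> real" where
  "ent b \<Omega> X = (\<Sum>y\<in>X ` \<Omega>.
     let pr = real (card {\<omega>\<in>\<Omega>. X \<omega> = y}) / real (card \<Omega>) in - pr * log b pr)"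

text \<open>Entropy in units of log q of a deterministic function of the file.\<close>
definition H :: "nat \<Rightarrow> ((nat \<Rightarrow> 'f::{finite,field}) \<Rightarrow> 'b) \<Rightarrow> real" where
  "H B (X :: (nat \<Rightarrow> 'f) \<Rightarrow> 'b) = ent (real CARD('f)) (file_space B) X"

text \<open>Exact-repair regenerating code with n = d+1 nodes 1..n. W i = content of node i,
  S x y = helper data sent by node x to repair node y.\<close>
definition exact_repair_code ::
  "nat \<Rightarrow> nat \<Rightarrow> nat \<Rightarrow> real \<Rightarrow> real \<Rightarrow> nat \<Rightarrow>
   (nat \<Rightarrow> (nat \<Rightarrow> 'f::{finite,field}) \<Rightarrow> 'w) \<Rightarrow> (nat \<Rightarrow> nat \<Rightarrow> (nat \<Rightarrow> 'f) \<Rightarrow> 's) \<Rightarrow> bool" where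
  "exact_repair_code n k d \<alpha> \<beta> B W S \<longleftrightarrow>
     1 \<le> k \<and> k \<le> d \<and> n = d + 1 \<and> \<alpha> > 0 \<and> \<beta> > 0 \<and>
     (\<forall>i\<in>{1..n}. H B (W i) \<le> \<alpha>) \<and>
     (\<forall>K. K \<subseteq> {1..n} \<and> card K = k \<longrightarrow>
        (\<forall>\<omega>\<in>file_space B. \<forall>\<omega>'\<in>file_space B. (\<forall>a\<in>K. W a \<omega> = W a \<omega>') \<longrightarrow> \<omega> = \<omega>')) \<and>
     (\<forall>y\<in>{1..n}. \<forall>x\<in>{1..n}. x \<noteq> y \<longrightarrow>
        (\<exists>g. \<forall>\<omega>\<in>file_space B. S x y \<omega> = g (W x \<omega>)) \<and> H B (S x y) \<le> \<beta>) \<and>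
     (\<forall>y\<in>{1..n}. \<forall>\<omega>\<in>file_space B. \<forall>\<omega>'\<in>file_space B.
        (\<forall>x\<in>{1..n} - {y}. S x y \<omega> = S x y \<omega>') \<longrightarrow> W y \<omega> = W y \<omega>')"

text \<open>Functional-repair optimal file size.\<close>
definition Bhat :: "nat \<Rightarrow> nat \<Rightarrow> real \<Rightarrow> real \<Rightarrow> real" where
  "Bhat k d \<alpha> \<beta> = (\<Sum>i=1..k. min \<alpha> ((real d - real i + 1) * \<beta>))"

end

theory Submission
  imports Defs
begin


definition cnt :: "'a set \<Rightarrow> ('a \<Rightarrow> 'b) \<Rightarrow> 'a \<Rightarrow> nat" where
  "cnt \<Omega> X \<omega> = card {\<omega>'\<in>\<Omega>. X \<omega>' = X \<omega>}"

lemma sum_fiber: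
  assumes "finite \<Omega>"
  shows "(\<Sum>\<omega>\<in>\<Omega>. g (X \<omega>) / real (cnt \<Omega> X \<omega>)) = (\<Sum>y\<in>X`\<Omega>. g y)"
proof -
  have "(\<Sum>\<omega>\<in>\<Omega>. g (X \<omega>) / real (cnt \<Omega> X \<omega>))
      = (\<Sum>y\<in>X`\<Omega>. \<Sum>\<omega>\<in>{x\<in>\<Omega>. X x = y}. g (X \<omega>) / real (cnt \<Omega> X \<omega>))"
    by (rule sum.image_gen[OF assms])
  also have "\<dots> = (\<Sum>y\<in>X`\<Omega>. g y)"
  proof (rule sum.cong[OF refl])
    fix y assume "y \<in> X`\<Omega>"
    then have ne: "card {x\<in>\<Omega>. X x = y} > 0" using assms by (auto simp: card_gt_0_iff)
    have "(\<Sum>\<omega>\<in>{x\<in>\<Omega>. X x = y}. g (X \<omega>) / real (cnt \<Omega> X \<omega>))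
        = (\<Sum>\<omega>\<in>{x\<in>\<Omega>. X x = y}. g y / real (card {x\<in>\<Omega>. X x = y}))"
      by (rule sum.cong) (auto simp: cnt_def)
    also have "\<dots> = g y" using ne by simp
    finally show "(\<Sum>\<omega>\<in>{x\<in>\<Omega>. X x = y}. g (X \<omega>) / real (cnt \<Omega> X \<omega>)) = g y" .
  qed
  finally show ?thesis .
qed

lemma cnt_pos: "finite \<Omega> \<Longrightarrow> \<omega> \<in> \<Omega> \<Longrightarrow> cnt \<Omega> X \<omega> > 0"
  unfolding cnt_def by (auto simp: card_gt_0_iff)

lemma cnt_le: "finite \<Omega> \<Longrightarrow> cnt \<Omega> X \<omega> \<le> card \<Omega>"
  unfolding cnt_def by (rule card_mono) auto

lemma ent_sum:
  assumes fin: "finite \<Omega>"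
  shows "ent b \<Omega> X = (\<Sum>\<omega>\<in>\<Omega>. - log b (real (cnt \<Omega> X \<omega>) / real (card \<Omega>))) / real (card \<Omega>)"
proof -
  define g where "g y = (let pr = real (card {\<omega>\<in>\<Omega>. X \<omega> = y}) / real (card \<Omega>) in - pr * log b pr)" for y
  have "ent b \<Omega> X = (\<Sum>y\<in>X`\<Omega>. g y)" unfolding ent_def g_def ..
  also have "\<dots> = (\<Sum>\<omega>\<in>\<Omega>. g (X \<omega>) / real (cnt \<Omega> X \<omega>))" by (rule sum_fiber[OF fin, symmetric])
  also have "\<dots> = (\<Sum>\<omega>\<in>\<Omega>. - log b (real (cnt \<Omega> X \<omega>) / real (card \<Omega>)) / real (card \<Omega>))"
  proof (rule sum.cong[OF refl])
    fix \<omega> assume w: "\<omega> \<in> \<Omega>"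
    have "cnt \<Omega> X \<omega> > 0" using cnt_pos[OF fin w] .
    then show "g (X \<omega>) / real (cnt \<Omega> X \<omega>) = - log b (real (cnt \<Omega> X \<omega>) / real (card \<Omega>)) / real (card \<Omega>)"
      unfolding g_def Let_def cnt_def[symmetric] by (simp add: field_simps)
  qed
  also have "\<dots> = (\<Sum>\<omega>\<in>\<Omega>. - log b (real (cnt \<Omega> X \<omega>) / real (card \<Omega>))) / real (card \<Omega>)"
    by (simp add: sum_divide_distrib)
  finally show ?thesis .
qed

lemma ent_cong:
  assumes fin: "finite \<Omega>" and eq: "\<And>\<omega> \<omega>'. \<omega> \<in> \<Omega> \<Longrightarrow> \<omega>' \<in> \<Omega> \<Longrightarrow> X \<omega> = X \<omega>' \<longleftrightarrow> Y \<omega> = Y \<omega>'"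
  shows "ent b \<Omega> X = ent b \<Omega> Y"
proof -
  have "\<And>\<omega>. \<omega> \<in> \<Omega> \<Longrightarrow> cnt \<Omega> X \<omega> = cnt \<Omega> Y \<omega>"
    unfolding cnt_def using eq by (intro arg_cong[where f=card]) blast
  then show ?thesis unfolding ent_sum[OF fin] by (simp cong: sum.cong)
qed

lemma ent_mono:
  assumes fin: "finite \<Omega>" and b: "b > 1"
    and dep: "\<And>\<omega> \<omega>'. \<omega> \<in> \<Omega> \<Longrightarrow> \<omega>' \<in> \<Omega> \<Longrightarrow> Y \<omega> = Y \<omega>' \<Longrightarrow> X \<omega> = X \<omega>'"
  shows "ent b \<Omega> X \<le> ent b \<Omega> Y"
proof -
  have "(\<Sum>\<omega>\<in>\<Omega>. - log b (real (cnt \<Omega> X \<omega>) / real (card \<Omega>)))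
     \<le> (\<Sum>\<omega>\<in>\<Omega>. - log b (real (cnt \<Omega> Y \<omega>) / real (card \<Omega>)))"
  proof (rule sum_mono)
    fix \<omega> assume w: "\<omega> \<in> \<Omega>"
    have sub: "{\<omega>'\<in>\<Omega>. Y \<omega>' = Y \<omega>} \<subseteq> {\<omega>'\<in>\<Omega>. X \<omega>' = X \<omega>}"
    proof
      fix u assume "u \<in> {\<omega>'\<in>\<Omega>. Y \<omega>' = Y \<omega>}"
      then have "u \<in> \<Omega>" "Y u = Y \<omega>" by auto
      then have "X u = X \<omega>" using dep[OF _ w] by blast
      then show "u \<in> {\<omega>'\<in>\<Omega>. X \<omega>' = X \<omega>}" using \<open>u \<in> \<Omega>\<close> by blast
    qed
    have le: "cnt \<Omega> Y \<omega> \<le> cnt \<Omega> X \<omega>"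
      unfolding cnt_def by (rule card_mono[OF _ sub]) (use fin in auto)
    have pos: "cnt \<Omega> Y \<omega> > 0" using cnt_pos[OF fin w] .
    have cp: "card \<Omega> > 0" using fin w by (auto simp: card_gt_0_iff)
    have "log b (real (cnt \<Omega> Y \<omega>) / real (card \<Omega>)) \<le> log b (real (cnt \<Omega> X \<omega>) / real (card \<Omega>))"
      using le pos cp b by (subst log_le_cancel_iff) (auto simp: divide_right_mono)
    then show "- log b (real (cnt \<Omega> X \<omega>) / real (card \<Omega>)) \<le> - log b (real (cnt \<Omega> Y \<omega>) / real (card \<Omega>))"
      by simp
  qed
  then show ?thesis unfolding ent_sum[OF fin] by (simp add: divide_right_mono)
qed

lemma ent_nonneg:
  assumes fin: "finite \<Omega>" and b: "b > 1"
  shows "0 \<le> ent b \<Omega> X"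
proof -
  have "0 \<le> (\<Sum>\<omega>\<in>\<Omega>. - log b (real (cnt \<Omega> X \<omega>) / real (card \<Omega>)))"
  proof (rule sum_nonneg)
    fix \<omega> assume w: "\<omega> \<in> \<Omega>"
    have pos: "cnt \<Omega> X \<omega> > 0" using cnt_pos[OF fin w] .
    have le: "cnt \<Omega> X \<omega> \<le> card \<Omega>" using cnt_le[OF fin] .
    have "log b (real (cnt \<Omega> X \<omega>) / real (card \<Omega>)) \<le> 0"
      using pos le b by (subst log_le_zero_cancel_iff) auto
    then show "0 \<le> - log b (real (cnt \<Omega> X \<omega>) / real (card \<Omega>))" by simp
  qed
  then show ?thesis unfolding ent_sum[OF fin] by simp
qed

lemma ent_const:
  assumes fin: "finite \<Omega>"
  shows "ent b \<Omega> (\<lambda>\<omega>. c) = 0"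
  unfolding ent_sum[OF fin] cnt_def by simp

lemma count_key:
  assumes fin: "finite \<Omega>"
  shows "(\<Sum>\<omega>\<in>\<Omega>. real (cnt \<Omega> (\<lambda>\<omega>. (X \<omega>, Z \<omega>)) \<omega>) * real (cnt \<Omega> (\<lambda>\<omega>. (Y \<omega>, Z \<omega>)) \<omega>)
          / (real (cnt \<Omega> (\<lambda>\<omega>. (X \<omega>, Y \<omega>, Z \<omega>)) \<omega>) * real (cnt \<Omega> Z \<omega>))) \<le> real (card \<Omega>)"
proof -
  define g where "g t = (case t of (x,y,z) \<Rightarrow>
     real (card {u\<in>\<Omega>. X u = x \<and> Z u = z}) * real (card {v\<in>\<Omega>. Y v = y \<and> Z v = z})
      / real (card {u\<in>\<Omega>. Z u = z}))" for t
  define V where "V = (\<lambda>\<omega>. (X \<omega>, Y \<omega>, Z \<omega>))"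
  define P where "P = Sigma \<Omega> (\<lambda>u. {v\<in>\<Omega>. Z v = Z u})"
  define f where "f = (\<lambda>(u,v). (X u, Y v, Z u))"
  have finP: "finite P" unfolding P_def using fin by auto
  have gnn: "g t \<ge> 0" for t unfolding g_def by (auto split: prod.splits)
  have "(\<Sum>\<omega>\<in>\<Omega>. real (cnt \<Omega> (\<lambda>\<omega>. (X \<omega>, Z \<omega>)) \<omega>) * real (cnt \<Omega> (\<lambda>\<omega>. (Y \<omega>, Z \<omega>)) \<omega>)
          / (real (cnt \<Omega> (\<lambda>\<omega>. (X \<omega>, Y \<omega>, Z \<omega>)) \<omega>) * real (cnt \<Omega> Z \<omega>)))
      = (\<Sum>\<omega>\<in>\<Omega>. g (V \<omega>) / real (cnt \<Omega> V \<omega>))"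
    by (rule sum.cong) (auto simp: g_def V_def cnt_def)
  also have "\<dots> = (\<Sum>t\<in>V`\<Omega>. g t)" by (rule sum_fiber[OF fin])
  also have "\<dots> \<le> (\<Sum>t\<in>f`P. g t)"
  proof (rule sum_mono2)
    show "finite (f`P)" using finP by simp
    show "V ` \<Omega> \<subseteq> f ` P"
    proof
      fix t assume "t \<in> V`\<Omega>"
      then obtain \<omega> where w: "\<omega> \<in> \<Omega>" "t = V \<omega>" by auto
      then have "(\<omega>,\<omega>) \<in> P" "t = f (\<omega>,\<omega>)" unfolding P_def f_def V_def by auto
      then show "t \<in> f`P" by blast
    qed
    show "\<And>b. b \<in> f ` P - V ` \<Omega> \<Longrightarrow> 0 \<le> g b" using gnn by blast
  qed
  also have "\<dots> = (\<Sum>p\<in>P. g (f p) / real (cnt P f p))" by (rule sum_fiber[OF finP, symmetric])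
  also have "\<dots> = (\<Sum>p\<in>P. 1 / real (card {w\<in>\<Omega>. Z w = Z (fst p)}))"
  proof (rule sum.cong[OF refl])
    fix p assume pP: "p \<in> P"
    obtain u v where p: "p = (u,v)" by (cases p)
    have u: "u \<in> \<Omega>" and v: "v \<in> \<Omega>" and zv: "Z v = Z u" using pP p unfolding P_def by auto
    have eq: "{p'\<in>P. f p' = f p} = {u'\<in>\<Omega>. X u' = X u \<and> Z u' = Z u} \<times> {v'\<in>\<Omega>. Y v' = Y v \<and> Z v' = Z u}"
      unfolding P_def f_def p by auto
    have c1: "card {u'\<in>\<Omega>. X u' = X u \<and> Z u' = Z u} > 0" using u fin by (auto simp: card_gt_0_iff)
    have c2: "card {v'\<in>\<Omega>. Y v' = Y v \<and> Z v' = Z u} > 0" using v zv fin by (auto simp: card_gt_0_iff)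
    have c3: "card {w\<in>\<Omega>. Z w = Z u} > 0" using u fin by (auto simp: card_gt_0_iff)
    have "cnt P f p = card {u'\<in>\<Omega>. X u' = X u \<and> Z u' = Z u} * card {v'\<in>\<Omega>. Y v' = Y v \<and> Z v' = Z u}"
      unfolding cnt_def eq card_cartesian_product ..
    then show "g (f p) / real (cnt P f p) = 1 / real (card {w\<in>\<Omega>. Z w = Z (fst p)})"
      using c1 c2 c3 unfolding g_def f_def p by (simp add: field_simps)
  qed
  also have "\<dots> = (\<Sum>u\<in>\<Omega>. \<Sum>v\<in>{v\<in>\<Omega>. Z v = Z u}. 1 / real (card {w\<in>\<Omega>. Z w = Z u}))"
    unfolding P_def using fin by (subst sum.Sigma) (auto simp: split_beta)
  also have "\<dots> = (\<Sum>u\<in>\<Omega>. 1)"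
  proof (rule sum.cong[OF refl])
    fix u assume "u \<in> \<Omega>"
    then have "card {w\<in>\<Omega>. Z w = Z u} > 0" using fin by (auto simp: card_gt_0_iff)
    then show "(\<Sum>v\<in>{v\<in>\<Omega>. Z v = Z u}. 1 / real (card {w\<in>\<Omega>. Z w = Z u})) = 1" by simp
  qed
  also have "\<dots> = real (card \<Omega>)" by simp
  finally show ?thesis .
qed

lemma ent_submod:
  assumes fin: "finite \<Omega>" and b: "b > 1"
  shows "ent b \<Omega> (\<lambda>\<omega>. (X \<omega>, Y \<omega>, Z \<omega>)) + ent b \<Omega> Z
       \<le> ent b \<Omega> (\<lambda>\<omega>. (X \<omega>, Z \<omega>)) + ent b \<Omega> (\<lambda>\<omega>. (Y \<omega>, Z \<omega>))"
proof (cases "\<Omega> = {}")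
  case True then show ?thesis by (simp add: ent_def)
next
  case False
  define N where "N = real (card \<Omega>)"
  have Npos: "N > 0" unfolding N_def using fin False by (auto simp: card_gt_0_iff)
  let ?a = "\<lambda>\<omega>. real (cnt \<Omega> (\<lambda>\<omega>. (X \<omega>, Y \<omega>, Z \<omega>)) \<omega>)"
  let ?z = "\<lambda>\<omega>. real (cnt \<Omega> Z \<omega>)"
  let ?c = "\<lambda>\<omega>. real (cnt \<Omega> (\<lambda>\<omega>. (X \<omega>, Z \<omega>)) \<omega>)"
  let ?d = "\<lambda>\<omega>. real (cnt \<Omega> (\<lambda>\<omega>. (Y \<omega>, Z \<omega>)) \<omega>)"
  have lb: "ln b > 0" using b by simp
  have trm: "log b (?a \<omega> / N) + log b (?z \<omega> / N) - log b (?c \<omega> / N) - log b (?d \<omega> / N)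
      \<ge> (1 - ?c \<omega> * ?d \<omega> / (?a \<omega> * ?z \<omega>)) / ln b" if w: "\<omega> \<in> \<Omega>" for \<omega>
  proof -
    have pa: "?a \<omega> > 0" and pz: "?z \<omega> > 0" and pc: "?c \<omega> > 0" and pd: "?d \<omega> > 0"
      using cnt_pos[OF fin w] by auto
    define r where "r = ?a \<omega> * ?z \<omega> / (?c \<omega> * ?d \<omega>)"
    have rpos: "r > 0" unfolding r_def using pa pz pc pd by simp
    have "log b (?a \<omega> / N) + log b (?z \<omega> / N) - log b (?c \<omega> / N) - log b (?d \<omega> / N)
        = (ln (?a \<omega>) + ln (?z \<omega>) - ln (?c \<omega>) - ln (?d \<omega>)) / ln b"
      using pa pz pc pd Npos by (simp add: log_def ln_div diff_divide_distrib add_divide_distrib)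
    also have "ln (?a \<omega>) + ln (?z \<omega>) - ln (?c \<omega>) - ln (?d \<omega>) = ln r"
      unfolding r_def using pa pz pc pd by (simp add: ln_div ln_mult)
    also have "ln r \<ge> 1 - 1 / r"
    proof -
      have "ln (1/r) \<le> 1/r - 1" using rpos by (intro ln_le_minus_one) simp
      then show ?thesis using rpos by (simp add: ln_div)
    qed
    then have "ln r / ln b \<ge> (1 - 1 / r) / ln b" using lb by (simp add: divide_right_mono)
    moreover have "1 / r = ?c \<omega> * ?d \<omega> / (?a \<omega> * ?z \<omega>)" unfolding r_def by simp
    ultimately show ?thesis by simp
  qed
  have "(\<Sum>\<omega>\<in>\<Omega>. (1 - ?c \<omega> * ?d \<omega> / (?a \<omega> * ?z \<omega>)) / ln b)
      = (N - (\<Sum>\<omega>\<in>\<Omega>. ?c \<omega> * ?d \<omega> / (?a \<omega> * ?z \<omega>))) / ln b"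
    unfolding N_def by (simp add: sum_divide_distrib[symmetric] sum_subtractf)
  also have "\<dots> \<ge> 0"
    using count_key[OF fin, of X Z Y] lb unfolding N_def by (simp add: mult.commute)
  finally have s0: "0 \<le> (\<Sum>\<omega>\<in>\<Omega>. (1 - ?c \<omega> * ?d \<omega> / (?a \<omega> * ?z \<omega>)) / ln b)" .
  also have "\<dots> \<le> (\<Sum>\<omega>\<in>\<Omega>. log b (?a \<omega> / N) + log b (?z \<omega> / N) - log b (?c \<omega> / N) - log b (?d \<omega> / N))"
    by (rule sum_mono) (use trm in auto)
  finally have "0 \<le> (\<Sum>\<omega>\<in>\<Omega>. - log b (?c \<omega> / N)) + (\<Sum>\<omega>\<in>\<Omega>. - log b (?d \<omega> / N))
      - (\<Sum>\<omega>\<in>\<Omega>. - log b (?a \<omega> / N)) - (\<Sum>\<omega>\<in>\<Omega>. - log b (?z \<omega> / N))"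
    by (simp add: sum.distrib sum_subtractf sum_negf)
  then show ?thesis unfolding ent_sum[OF fin] N_def[symmetric] using Npos
    by (simp add: divide_right_mono add_divide_distrib[symmetric] diff_divide_distrib[symmetric] divide_le_cancel)
qed




lemma restrict_eq_iff': "restrict f A = restrict g A \<longleftrightarrow> (\<forall>x\<in>A. f x = g x)"
  by (auto simp: restrict_def fun_eq_iff split: if_splits)

lemma fs_finite: "finite (file_space B :: (nat \<Rightarrow> 'f::{finite,field}) set)"
  unfolding file_space_def by (rule finite_PiE) auto

lemma fs_ne: "(file_space B :: (nat \<Rightarrow> 'f::{finite,field}) set) \<noteq> {}"
  unfolding file_space_def by (simp add: PiE_eq_empty_iff)

lemma q_gt1: "real CARD('f::{finite,field}) > 1"
proof -
  have "card {0::'f, 1} \<le> CARD('f)" by (rule card_mono) auto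
  then show ?thesis by simp
qed

lemma H_cong:
  assumes "\<And>\<omega> \<omega>'. \<omega> \<in> file_space B \<Longrightarrow> \<omega>' \<in> file_space B \<Longrightarrow> X \<omega> = X \<omega>' \<longleftrightarrow> Y \<omega> = Y \<omega>'"
  shows "H B (X :: (nat \<Rightarrow> 'f::{finite,field}) \<Rightarrow> 'b) = H B (Y :: (nat \<Rightarrow> 'f) \<Rightarrow> 'c)"
  unfolding H_def by (rule ent_cong[OF fs_finite assms])

lemma H_mono:
  assumes "\<And>\<omega> \<omega>'. \<omega> \<in> file_space B \<Longrightarrow> \<omega>' \<in> file_space B \<Longrightarrow> Y \<omega> = Y \<omega>' \<Longrightarrow> X \<omega> = X \<omega>'"
  shows "H B (X :: (nat \<Rightarrow> 'f::{finite,field}) \<Rightarrow> 'b) \<le> H B (Y :: (nat \<Rightarrow> 'f) \<Rightarrow> 'c)"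
  unfolding H_def by (rule ent_mono[OF fs_finite q_gt1 assms])

lemma H_nonneg: "0 \<le> H B (X :: (nat \<Rightarrow> 'f::{finite,field}) \<Rightarrow> 'b)"
  unfolding H_def by (rule ent_nonneg[OF fs_finite q_gt1])

lemma H_const: "H B (\<lambda>\<omega>::nat \<Rightarrow> 'f::{finite,field}. c) = 0"
  unfolding H_def by (rule ent_const[OF fs_finite])

lemma H_submod:
  "H B (\<lambda>\<omega>::nat \<Rightarrow> 'f::{finite,field}. (X \<omega>, Y \<omega>, Z \<omega>)) + H B Z
       \<le> H B (\<lambda>\<omega>. (X \<omega>, Z \<omega>)) + H B (\<lambda>\<omega>. (Y \<omega>, Z \<omega>))"
  unfolding H_def by (rule ent_submod[OF fs_finite q_gt1])

lemma H_subadd: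
  "H B (\<lambda>\<omega>::nat \<Rightarrow> 'f::{finite,field}. (X \<omega>, Y \<omega>)) \<le> H B X + H B Y"
proof -
  have "H B (\<lambda>\<omega>::nat \<Rightarrow> 'f. (X \<omega>, Y \<omega>, ())) + H B (\<lambda>\<omega>::nat \<Rightarrow> 'f. ())
       \<le> H B (\<lambda>\<omega>. (X \<omega>, ())) + H B (\<lambda>\<omega>. (Y \<omega>, ()))" by (rule H_submod[of B X Y "\<lambda>\<omega>. ()"])
  moreover have "H B (\<lambda>\<omega>::nat \<Rightarrow> 'f. (X \<omega>, Y \<omega>, ())) = H B (\<lambda>\<omega>. (X \<omega>, Y \<omega>))" by (rule H_cong) auto
  moreover have "H B (\<lambda>\<omega>::nat \<Rightarrow> 'f. (X \<omega>, ())) = H B X" by (rule H_cong) auto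
  moreover have "H B (\<lambda>\<omega>::nat \<Rightarrow> 'f. (Y \<omega>, ())) = H B Y" by (rule H_cong) auto
  ultimately show ?thesis by (simp add: H_const)
qed

lemma H_id: "H B (\<lambda>\<omega>::nat \<Rightarrow> 'f::{finite,field}. \<omega>) = real B"
proof -
  let ?\<Omega> = "file_space B :: (nat \<Rightarrow> 'f) set"
  let ?q = "real CARD('f)"
  have c1: "cnt ?\<Omega> (\<lambda>\<omega>. \<omega>) \<omega> = 1" if "\<omega> \<in> ?\<Omega>" for \<omega>
    unfolding cnt_def using that by (simp add: Collect_conj_eq)
  have N: "card ?\<Omega> = CARD('f) ^ B" unfolding file_space_def by (simp add: card_PiE)
  have Npos: "card ?\<Omega> > 0" using fs_finite fs_ne by (auto simp: card_gt_0_iff)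
  have "H B (\<lambda>\<omega>::nat \<Rightarrow> 'f. \<omega>) = (\<Sum>\<omega>\<in>?\<Omega>. - log ?q (1 / real (card ?\<Omega>))) / real (card ?\<Omega>)"
    unfolding H_def ent_sum[OF fs_finite] by (simp add: c1 cong: sum.cong)
  also have "\<dots> = - log ?q (1 / real (card ?\<Omega>))" using Npos by simp
  also have "\<dots> = log ?q (real (card ?\<Omega>))" using Npos q_gt1 by (simp add: log_divide)
  also have "\<dots> = real B" unfolding N using q_gt1[where 'f='f] by (simp add: log_nat_power)
  finally show ?thesis .
qed

lemma H_restrict_cond:
  assumes "finite L"
  shows "H B (\<lambda>\<omega>::nat \<Rightarrow> 'f::{finite,field}. (restrict (\<lambda>y. F y \<omega>) L, Z \<omega>)) - H B Z
     \<le> (\<Sum>y\<in>L. H B (\<lambda>\<omega>. (F y \<omega>, Z \<omega>)) - H B Z)"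
  using assms
proof (induction L rule: finite_induct)
  case empty
  have "H B (\<lambda>\<omega>::nat \<Rightarrow> 'f. (restrict (\<lambda>y. F y \<omega>) {}, Z \<omega>)) = H B Z" by (rule H_cong) auto
  then show ?case by (simp only: sum.empty)
next
  case (insert y L)
  have "H B (\<lambda>\<omega>::nat \<Rightarrow> 'f. (restrict (\<lambda>y. F y \<omega>) (insert y L), Z \<omega>))
      = H B (\<lambda>\<omega>. (F y \<omega>, restrict (\<lambda>y. F y \<omega>) L, Z \<omega>))"
    by (rule H_cong) (auto simp: restrict_eq_iff')
  moreover have "H B (\<lambda>\<omega>::nat \<Rightarrow> 'f. (F y \<omega>, restrict (\<lambda>y. F y \<omega>) L, Z \<omega>)) + H B Z
      \<le> H B (\<lambda>\<omega>. (F y \<omega>, Z \<omega>)) + H B (\<lambda>\<omega>. (restrict (\<lambda>y. F y \<omega>) L, Z \<omega>))"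
    by (rule H_submod)
  moreover have "(\<Sum>y\<in>insert y L. H B (\<lambda>\<omega>::nat \<Rightarrow> 'f. (F y \<omega>, Z \<omega>)) - H B Z)
     = (H B (\<lambda>\<omega>. (F y \<omega>, Z \<omega>)) - H B Z) + (\<Sum>y\<in>L. H B (\<lambda>\<omega>::nat \<Rightarrow> 'f. (F y \<omega>, Z \<omega>)) - H B Z)"
    by (rule sum.insert) (use insert in auto)
  ultimately show ?case using insert.IH by linarith
qed

lemma H_restrict_subadd:
  assumes "finite L"
  shows "H B (\<lambda>\<omega>::nat \<Rightarrow> 'f::{finite,field}. restrict (\<lambda>y. F y \<omega>) L) \<le> (\<Sum>y\<in>L. H B (F y))"
proof -
  have "H B (\<lambda>\<omega>::nat \<Rightarrow> 'f. (restrict (\<lambda>y. F y \<omega>) L, ())) - H B (\<lambda>\<omega>::nat \<Rightarrow> 'f. ())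
     \<le> (\<Sum>y\<in>L. H B (\<lambda>\<omega>. (F y \<omega>, ())) - H B (\<lambda>\<omega>::nat \<Rightarrow> 'f. ()))" by (rule H_restrict_cond[OF assms, of B F "\<lambda>\<omega>. ()"])
  moreover have "H B (\<lambda>\<omega>::nat \<Rightarrow> 'f. (restrict (\<lambda>y. F y \<omega>) L, ())) = H B (\<lambda>\<omega>. restrict (\<lambda>y. F y \<omega>) L)"
    by (rule H_cong) auto
  moreover have "H B (\<lambda>\<omega>::nat \<Rightarrow> 'f. (F y \<omega>, ())) = H B (F y)" for y by (rule H_cong) auto
  ultimately show ?thesis by (simp add: H_const)
qed




definition WS :: "(nat \<Rightarrow> 'a \<Rightarrow> 'w) \<Rightarrow> nat set \<Rightarrow> 'a \<Rightarrow> (nat \<Rightarrow> 'w)" where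
  "WS W A = (\<lambda>\<omega>. restrict (\<lambda>a. W a \<omega>) A)"

definition bnd :: "real \<Rightarrow> real \<Rightarrow> nat \<Rightarrow> nat \<Rightarrow> real" where
  "bnd \<alpha> \<beta> d i = min \<alpha> ((real d - real i + 1) * \<beta>)"

lemma Bhat_bnd: "Bhat k d \<alpha> \<beta> = (\<Sum>i=1..k. bnd \<alpha> \<beta> d i)"
  unfolding Bhat_def bnd_def ..

lemma sum_split4:
  fixes f :: "nat \<Rightarrow> real"
  assumes "1 \<le> j" "j + 1 \<le> k"
  shows "(\<Sum>i=1..k. f i) = (\<Sum>i\<in>{0<..j-1}. f i) + f j + f (j+1) + (\<Sum>i\<in>{j+1<..k}. f i)"
proof -
  have e1: "{1..k} = {0<..j-1} \<union> {j-1<..k}" using assms by auto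
  have e2: "{j-1<..k} = insert j (insert (j+1) {j+1<..k})" using assms by auto
  have "(\<Sum>i=1..k. f i) = (\<Sum>i\<in>{0<..j-1}. f i) + (\<Sum>i\<in>{j-1<..k}. f i)"
    unfolding e1 by (rule sum.union_disjoint) auto
  also have "(\<Sum>i\<in>{j-1<..k}. f i) = f j + (f (j+1) + (\<Sum>i\<in>{j+1<..k}. f i))"
    unfolding e2 by (simp add: sum.insert)
  finally show ?thesis by simp
qed

context
  fixes W :: "nat \<Rightarrow> (nat \<Rightarrow> 'f::{finite,field}) \<Rightarrow> 'w" and S :: "nat \<Rightarrow> nat \<Rightarrow> (nat \<Rightarrow> 'f) \<Rightarrow> 's"
    and n k d :: nat and \<alpha> \<beta> :: real and B :: nat
  assumes code: "exact_repair_code n k d \<alpha> \<beta> B W S"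
begin

lemma c_par: "1 \<le> k" "k \<le> d" "n = d + 1" "\<alpha> > 0" "\<beta> > 0"
  using code unfolding exact_repair_code_def by auto

lemma c_W: "i \<in> {1..n} \<Longrightarrow> H B (W i) \<le> \<alpha>"
  using code unfolding exact_repair_code_def by auto

lemma c_dc: "K \<subseteq> {1..n} \<Longrightarrow> card K = k \<Longrightarrow> \<omega> \<in> file_space B \<Longrightarrow> \<omega>' \<in> file_space B
   \<Longrightarrow> \<forall>a\<in>K. W a \<omega> = W a \<omega>' \<Longrightarrow> \<omega> = \<omega>'"
  using code unfolding exact_repair_code_def by blast

lemma c_fun: "y \<in> {1..n} \<Longrightarrow> x \<in> {1..n} \<Longrightarrow> x \<noteq> y \<Longrightarrow> \<exists>g. \<forall>\<omega>\<in>file_space B. S x y \<omega> = g (W x \<omega>)"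
  using code unfolding exact_repair_code_def by blast

lemma c_fun': "y \<in> {1..n} \<Longrightarrow> x \<in> {1..n} \<Longrightarrow> x \<noteq> y \<Longrightarrow> \<omega> \<in> file_space B \<Longrightarrow> \<omega>' \<in> file_space B
   \<Longrightarrow> W x \<omega> = W x \<omega>' \<Longrightarrow> S x y \<omega> = S x y \<omega>'"
  using c_fun by metis

lemma c_S: "y \<in> {1..n} \<Longrightarrow> x \<in> {1..n} \<Longrightarrow> x \<noteq> y \<Longrightarrow> H B (S x y) \<le> \<beta>"
  using code unfolding exact_repair_code_def by blast

lemma c_rep: "y \<in> {1..n} \<Longrightarrow> \<omega> \<in> file_space B \<Longrightarrow> \<omega>' \<in> file_space B
   \<Longrightarrow> (\<forall>x\<in>{1..n} - {y}. S x y \<omega> = S x y \<omega>') \<Longrightarrow> W y \<omega> = W y \<omega>'"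
  using code unfolding exact_repair_code_def by blast

lemma H_S_sum:
  assumes "C \<subseteq> {1..n} - {y}" "y \<in> {1..n}"
  shows "H B (\<lambda>\<omega>. restrict (\<lambda>x. S x y \<omega>) C) \<le> real (card C) * \<beta>"
proof -
  have fin: "finite C" using assms(1) finite_subset by blast
  have "H B (\<lambda>\<omega>. restrict (\<lambda>x. S x y \<omega>) C) \<le> (\<Sum>x\<in>C. H B (S x y))"
    by (rule H_restrict_subadd[OF fin])
  also have "\<dots> \<le> (\<Sum>x\<in>C. \<beta>)"
  proof (rule sum_mono)
    fix x assume "x \<in> C"
    then have "x \<in> {1..n}" "x \<noteq> y" using assms by auto
    then show "H B (S x y) \<le> \<beta>" by (rule c_S[OF assms(2)])
  qed
  finally show ?thesis by simp
qed

lemma H_WS_empty: "H B (WS W {}) = 0"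
proof -
  have "WS W {} = (\<lambda>\<omega>::nat \<Rightarrow> 'f. (\<lambda>a::nat. undefined::'w))" by (auto simp: WS_def fun_eq_iff)
  then show ?thesis by (simp add: H_const)
qed

lemma dc_bound:
  assumes "K \<subseteq> {1..n}" "card K = k"
  shows "real B \<le> H B (WS W K)"
proof -
  have "H B (\<lambda>\<omega>::nat \<Rightarrow> 'f. \<omega>) \<le> H B (WS W K)"
  proof (rule H_mono)
    fix \<omega> \<omega>' :: "nat \<Rightarrow> 'f" assume w: "\<omega> \<in> file_space B" "\<omega>' \<in> file_space B"
      and e: "WS W K \<omega> = WS W K \<omega>'"
    then have "\<forall>a\<in>K. W a \<omega> = W a \<omega>'" by (simp add: WS_def restrict_eq_iff')
    then show "\<omega> = \<omega>'" by (rule c_dc[OF assms w])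
  qed
  then show ?thesis by (simp add: H_id)
qed

lemma incr:
  assumes A: "A \<subseteq> {1..n}" and y: "y \<in> {1..n}" "y \<notin> A"
  shows "H B (WS W (insert y A)) \<le> H B (WS W A) + bnd \<alpha> \<beta> d (card A + 1)"
proof -
  have finA: "finite A" using A finite_subset by blast
  have "H B (WS W (insert y A)) = H B (\<lambda>\<omega>. (W y \<omega>, WS W A \<omega>))"
    by (rule H_cong) (auto simp: WS_def restrict_eq_iff')
  also have "\<dots> \<le> H B (W y) + H B (WS W A)" by (rule H_subadd)
  finally have b1: "H B (WS W (insert y A)) \<le> \<alpha> + H B (WS W A)" using c_W[OF y(1)] by simp
  define C where "C = {1..n} - insert y A"
  have CS: "C \<subseteq> {1..n} - {y}" unfolding C_def by auto
  have "H B (WS W (insert y A)) \<le> H B (\<lambda>\<omega>. (restrict (\<lambda>x. S x y \<omega>) C, WS W A \<omega>))"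
  proof (rule H_mono)
    fix \<omega> \<omega>' assume w: "\<omega> \<in> file_space B" "\<omega>' \<in> file_space B"
      and eq: "(restrict (\<lambda>x. S x y \<omega>) C, WS W A \<omega>) = (restrict (\<lambda>x. S x y \<omega>') C, WS W A \<omega>')"
    have eC: "\<forall>x\<in>C. S x y \<omega> = S x y \<omega>'" and eA: "\<forall>a\<in>A. W a \<omega> = W a \<omega>'"
      using eq by (auto simp: WS_def restrict_eq_iff')
    have "W y \<omega> = W y \<omega>'"
    proof (rule c_rep[OF y(1) w], intro ballI)
      fix x assume x: "x \<in> {1..n} - {y}"
      show "S x y \<omega> = S x y \<omega>'"
      proof (cases "x \<in> A")
        case True
        then show ?thesis using c_fun'[OF y(1) _ _ w] x eA by auto
      next
        case False
        then have "x \<in> C" using x unfolding C_def by auto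
        then show ?thesis using eC by auto
      qed
    qed
    then show "WS W (insert y A) \<omega> = WS W (insert y A) \<omega>'"
      using eA by (auto simp: WS_def restrict_eq_iff')
  qed
  also have "\<dots> \<le> H B (\<lambda>\<omega>. restrict (\<lambda>x. S x y \<omega>) C) + H B (WS W A)" by (rule H_subadd)
  also have "\<dots> \<le> real (card C) * \<beta> + H B (WS W A)"
    using H_S_sum[OF CS y(1)] by simp
  finally have b2: "H B (WS W (insert y A)) \<le> real (card C) * \<beta> + H B (WS W A)" .
  have "card (insert y A) = card A + 1" using finA y by simp
  moreover have "card C = n - card (insert y A)" unfolding C_def
    using card_Diff_subset[of "insert y A" "{1..n}"] A y finA by auto
  moreover have "card (insert y A) \<le> n" using A y by (intro card_mono[of "{1..n}", simplified]) auto
  ultimately have "real (card C) = real d - real (card A + 1) + 1" using c_par(3) by auto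
  then show ?thesis using b1 b2 unfolding bnd_def by (auto simp: min_def)
qed

lemma chain:
  assumes R: "R \<subseteq> {1..n}" and G: "G \<subseteq> {1..n}" and disj: "G \<inter> R = {}"
  shows "H B (WS W (G \<union> R)) - H B (WS W G) \<le> (\<Sum>i\<in>{card G<..card G + card R}. bnd \<alpha> \<beta> d i)"
proof -
  have finR: "finite R" using R finite_subset by blast
  have finG: "finite G" using G finite_subset by blast
  show ?thesis using finR R disj
  proof (induction R rule: finite_induct)
    case empty then show ?case by simp
  next
    case (insert r R)
    have "H B (WS W (G \<union> insert r R)) = H B (WS W (insert r (G \<union> R)))" by simp
    also have "\<dots> \<le> H B (WS W (G \<union> R)) + bnd \<alpha> \<beta> d (card (G \<union> R) + 1)"
      by (rule incr) (use insert G in auto)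
    finally have s1: "H B (WS W (G \<union> insert r R)) \<le> H B (WS W (G \<union> R)) + bnd \<alpha> \<beta> d (card G + card R + 1)"
      using insert finG by (simp add: card_Un_disjoint)
    have e: "{card G<..card G + card (insert r R)} = insert (card G + card R + 1) {card G<..card G + card R}"
      using insert by auto
    have s2: "(\<Sum>i\<in>{card G<..card G + card (insert r R)}. bnd \<alpha> \<beta> d i)
       = bnd \<alpha> \<beta> d (card G + card R + 1) + (\<Sum>i\<in>{card G<..card G + card R}. bnd \<alpha> \<beta> d i)"
      unfolding e by (rule sum.insert) auto
    have "H B (WS W (G \<union> R)) - H B (WS W G) \<le> (\<Sum>i\<in>{card G<..card G + card R}. bnd \<alpha> \<beta> d i)"
      using insert by auto
    then show ?case using s1 s2 by linarith
  qed
qed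


lemma core1:
  assumes Z: "Z \<subseteq> {1..n}" "card Z = j" and m: "m \<in> {1..n}" "m \<notin> Z" and L: "L \<subseteq> Z"
  shows "H B (\<lambda>\<omega>. restrict (\<lambda>y. S m y \<omega>) L) \<le> \<alpha> - (H B (WS W (insert m Z)) - H B (WS W Z))
     + (\<Sum>y\<in>L. (real d + 1 - real j) * \<beta> - (H B (WS W Z) - H B (WS W (Z - {y}))))"
proof -
  have finZ: "finite Z" using Z finite_subset by blast
  have finL: "finite L" using L finZ finite_subset by blast
  define SL where "SL = (\<lambda>\<omega>. restrict (\<lambda>y. S m y \<omega>) L)"
  have SLdep: "SL \<omega> = SL \<omega>'" if "\<omega> \<in> file_space B" "\<omega>' \<in> file_space B" "W m \<omega> = W m \<omega>'" for \<omega> \<omega>'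
    unfolding SL_def restrict_eq_iff'
  proof
    fix y assume y: "y \<in> L"
    then have "y \<in> {1..n}" "y \<noteq> m" using L Z m by auto
    then show "S m y \<omega> = S m y \<omega>'" using c_fun'[OF _ m(1) _ that] by auto
  qed
  have sm: "H B (\<lambda>\<omega>. (W m \<omega>, WS W Z \<omega>, SL \<omega>)) + H B SL
      \<le> H B (\<lambda>\<omega>. (W m \<omega>, SL \<omega>)) + H B (\<lambda>\<omega>. (WS W Z \<omega>, SL \<omega>))" by (rule H_submod)
  have e1: "H B (\<lambda>\<omega>. (W m \<omega>, WS W Z \<omega>, SL \<omega>)) = H B (WS W (insert m Z))"
  proof (rule H_cong)
    fix \<omega> \<omega>' :: "nat \<Rightarrow> 'f" assume w: "\<omega> \<in> file_space B" "\<omega>' \<in> file_space B"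
    have eqv: "WS W (insert m Z) \<omega> = WS W (insert m Z) \<omega>' \<longleftrightarrow> W m \<omega> = W m \<omega>' \<and> WS W Z \<omega> = WS W Z \<omega>'"
      unfolding WS_def restrict_eq_iff' by blast
    show "((W m \<omega>, WS W Z \<omega>, SL \<omega>) = (W m \<omega>', WS W Z \<omega>', SL \<omega>'))
       \<longleftrightarrow> WS W (insert m Z) \<omega> = WS W (insert m Z) \<omega>'"
      unfolding eqv using SLdep[OF w] by auto
  qed
  have e2: "H B (\<lambda>\<omega>. (W m \<omega>, SL \<omega>)) = H B (W m)"
  proof (rule H_cong)
    fix \<omega> \<omega>' :: "nat \<Rightarrow> 'f" assume w: "\<omega> \<in> file_space B" "\<omega>' \<in> file_space B"
    show "((W m \<omega>, SL \<omega>) = (W m \<omega>', SL \<omega>')) \<longleftrightarrow> W m \<omega> = W m \<omega>'"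
      using SLdep[OF w] by auto
  qed
  have e3: "H B (\<lambda>\<omega>. (WS W Z \<omega>, SL \<omega>)) = H B (\<lambda>\<omega>. (SL \<omega>, WS W Z \<omega>))"
    by (rule H_cong) auto
  have rc: "H B (\<lambda>\<omega>. (SL \<omega>, WS W Z \<omega>)) - H B (WS W Z)
     \<le> (\<Sum>y\<in>L. H B (\<lambda>\<omega>. (S m y \<omega>, WS W Z \<omega>)) - H B (WS W Z))"
    unfolding SL_def by (rule H_restrict_cond[OF finL])
  define C where "C = {1..n} - Z"
  have cardC: "real (card C) = real d + 1 - real j"
  proof -
    have "card C = n - card Z" unfolding C_def
      using card_Diff_subset[of Z "{1..n}"] Z finZ by auto
    moreover have "card Z \<le> n" using Z by (intro card_mono[of "{1..n}", simplified]) auto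
    ultimately show ?thesis using c_par(3) Z by auto
  qed
  have each: "H B (\<lambda>\<omega>. (S m y \<omega>, WS W Z \<omega>)) - H B (WS W Z)
      \<le> (real d + 1 - real j) * \<beta> - (H B (WS W Z) - H B (WS W (Z - {y})))" if yL: "y \<in> L" for y
  proof -
    have y: "y \<in> Z" "y \<in> {1..n}" using yL L Z by auto
    have CS: "C \<subseteq> {1..n} - {y}" unfolding C_def using y by auto
    have "H B (\<lambda>\<omega>. (S m y \<omega>, WS W Z \<omega>)) \<le> H B (\<lambda>\<omega>. (restrict (\<lambda>x. S x y \<omega>) C, WS W (Z - {y}) \<omega>))"
    proof (rule H_mono)
      fix \<omega> \<omega>' assume w: "\<omega> \<in> file_space B" "\<omega>' \<in> file_space B"
        and eq: "(restrict (\<lambda>x. S x y \<omega>) C, WS W (Z - {y}) \<omega>) = (restrict (\<lambda>x. S x y \<omega>') C, WS W (Z - {y}) \<omega>')"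
      have eC: "\<forall>x\<in>C. S x y \<omega> = S x y \<omega>'" and eA: "\<forall>a\<in>Z - {y}. W a \<omega> = W a \<omega>'"
        using eq by (auto simp: WS_def restrict_eq_iff')
      have Wy: "W y \<omega> = W y \<omega>'"
      proof (rule c_rep[OF y(2) w], intro ballI)
        fix x assume x: "x \<in> {1..n} - {y}"
        show "S x y \<omega> = S x y \<omega>'"
        proof (cases "x \<in> Z")
          case True
          then show ?thesis using c_fun'[OF y(2) _ _ w] x eA by auto
        next
          case False
          then have "x \<in> C" using x unfolding C_def by auto
          then show ?thesis using eC by auto
        qed
      qed
      have "m \<in> C" using m unfolding C_def by auto
      then have "S m y \<omega> = S m y \<omega>'" using eC by auto
      moreover have "WS W Z \<omega> = WS W Z \<omega>'"
        unfolding WS_def restrict_eq_iff' using Wy eA by auto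
      ultimately show "(S m y \<omega>, WS W Z \<omega>) = (S m y \<omega>', WS W Z \<omega>')" by simp
    qed
    also have "\<dots> \<le> H B (\<lambda>\<omega>. restrict (\<lambda>x. S x y \<omega>) C) + H B (WS W (Z - {y}))" by (rule H_subadd)
    also have "\<dots> \<le> real (card C) * \<beta> + H B (WS W (Z - {y}))" using H_S_sum[OF CS y(2)] by simp
    finally show ?thesis unfolding cardC by simp
  qed
  have "(\<Sum>y\<in>L. H B (\<lambda>\<omega>. (S m y \<omega>, WS W Z \<omega>)) - H B (WS W Z))
     \<le> (\<Sum>y\<in>L. (real d + 1 - real j) * \<beta> - (H B (WS W Z) - H B (WS W (Z - {y}))))"
    by (rule sum_mono) (rule each)
  then have f: "H B SL \<le> \<alpha> - (H B (WS W (insert m Z)) - H B (WS W Z))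
     + (\<Sum>y\<in>L. (real d + 1 - real j) * \<beta> - (H B (WS W Z) - H B (WS W (Z - {y}))))"
    using sm e1 e2 e3 rc c_W[OF m(1)] by linarith
  then show ?thesis unfolding SL_def .
qed

lemma core2:
  assumes Z: "Z \<subseteq> {1..n}" "card Z = j" and m: "m \<in> {1..n}" "m \<notin> Z"
  shows "H B (WS W (insert m Z)) - H B (WS W Z) \<le> (real d - real j) * \<beta>"
proof -
  have "H B (WS W (insert m Z)) \<le> H B (WS W Z) + bnd \<alpha> \<beta> d (card Z + 1)" by (rule incr[OF Z(1) m])
  then show ?thesis unfolding bnd_def using Z by (auto simp: min_def split: if_splits)
qed

lemma core3:
  assumes Z: "Z \<subseteq> {1..n}" "card Z = j" and m: "m \<in> {1..n}" "m \<notin> Z" and y: "y \<in> Z"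
    and j: "1 \<le> j" "j + 1 \<le> k"
  shows "(H B (WS W Z) - H B (WS W (Z - {y}))) + (H B (WS W (insert m Z)) - H B (WS W Z))
     \<ge> bnd \<alpha> \<beta> d j + bnd \<alpha> \<beta> d (j+1) - (Bhat k d \<alpha> \<beta> - real B)"
proof -
  have finZ: "finite Z" using Z finite_subset by blast
  define U where "U = {1..n} - insert m Z"
  have cU: "card U = n - (j + 1)" unfolding U_def
    using card_Diff_subset[of "insert m Z" "{1..n}"] Z m finZ by auto
  have "k - j - 1 \<le> card U" using cU c_par by auto
  then obtain R where R: "R \<subseteq> U" "card R = k - j - 1" "finite R" by (rule obtain_subset_with_card_n)
  have RS: "R \<subseteq> {1..n}" "insert m Z \<inter> R = {}" using R U_def by auto
  have ImZ: "insert m Z \<subseteq> {1..n}" "card (insert m Z) = j + 1" using Z m finZ by auto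
  define K where "K = insert m Z \<union> R"
  have cK: "card K = k" unfolding K_def using card_Un_disjoint[of "insert m Z" R] RS ImZ finZ R j by auto
  have KS: "K \<subseteq> {1..n}" unfolding K_def using RS ImZ by auto
  have dc: "real B \<le> H B (WS W K)" by (rule dc_bound[OF KS cK])
  have ch1: "H B (WS W ({} \<union> (Z - {y}))) - H B (WS W {}) \<le> (\<Sum>i\<in>{card ({}::nat set)<..card ({}::nat set) + card (Z - {y})}. bnd \<alpha> \<beta> d i)"
    by (rule chain) (use Z in auto)
  have "card (Z - {y}) = j - 1" using Z y finZ by auto
  then have ch1': "H B (WS W (Z - {y})) \<le> (\<Sum>i\<in>{0<..j-1}. bnd \<alpha> \<beta> d i)"
    using ch1 by (simp add: H_WS_empty)
  have ch2: "H B (WS W (insert m Z \<union> R)) - H B (WS W (insert m Z))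
     \<le> (\<Sum>i\<in>{card (insert m Z)<..card (insert m Z) + card R}. bnd \<alpha> \<beta> d i)"
    by (rule chain[OF RS(1) ImZ(1) RS(2)])
  have "card (insert m Z) + card R = k" using ImZ R j by auto
  then have ch2': "H B (WS W K) - H B (WS W (insert m Z)) \<le> (\<Sum>i\<in>{j+1<..k}. bnd \<alpha> \<beta> d i)"
    using ch2 ImZ unfolding K_def by simp
  have sp: "Bhat k d \<alpha> \<beta> = (\<Sum>i\<in>{0<..j-1}. bnd \<alpha> \<beta> d i) + bnd \<alpha> \<beta> d j + bnd \<alpha> \<beta> d (j+1)
      + (\<Sum>i\<in>{j+1<..k}. bnd \<alpha> \<beta> d i)"
    unfolding Bhat_bnd by (rule sum_split4[OF j])
  show ?thesis using dc ch1' ch2' sp by linarith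
qed

end




lemma fin_arith:
  fixes eS \<alpha> Dm c t u :: real and D :: "nat \<Rightarrow> real"
  assumes h: "eS \<le> \<alpha> - Dm + (\<Sum>y\<in>L. c - D y)" and hD: "\<forall>y\<in>L. D y \<ge> t - Dm" and hu: "Dm \<le> u"
    and cl: "card L = l" and l1: "l \<ge> 1"
  shows "eS \<le> \<alpha> + real l * (c - t) + (real l - 1) * u"
proof -
  have "(\<Sum>y\<in>L. c - D y) \<le> (\<Sum>y\<in>L. c - t + Dm)" by (rule sum_mono) (use hD in auto)
  also have "\<dots> = real l * (c - t + Dm)" using cl by simp
  finally have s: "(\<Sum>y\<in>L. c - D y) \<le> real l * (c - t + Dm)" .
  have "(real l - 1) * Dm \<le> (real l - 1) * u" using hu l1 by (intro mult_left_mono) auto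
  then show ?thesis using h s by (simp add: algebra_simps)
qed

lemma obtain_Z:
  assumes "L \<subseteq> {1..n}" "m \<in> {1..n}" "m \<notin> L" "card L = l" "l \<le> j" "j + 1 \<le> n"
  obtains Z where "L \<subseteq> Z" "Z \<subseteq> {1..n}" "m \<notin> Z" "card Z = j"
proof -
  have finL: "finite L" using assms(1) finite_subset by blast
  define U where "U = {1..n} - insert m L"
  have "card U = n - card (insert m L)" unfolding U_def
    using card_Diff_subset[of "insert m L" "{1..(n::nat)}"] assms finL by auto
  then have "j - l \<le> card U" using assms finL by auto
  then obtain T where T: "T \<subseteq> U" "card T = j - l" "finite T" by (rule obtain_subset_with_card_n)
  have "card (L \<union> T) = j" using card_Un_disjoint[of L T] T finL assms unfolding U_def by auto
  moreover have "L \<subseteq> L \<union> T" "L \<union> T \<subseteq> {1..n}" "m \<notin> L \<union> T" using T assms unfolding U_def by auto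
  ultimately show ?thesis using that by blast
qed

theorem proposition2:
  fixes W :: "nat \<Rightarrow> (nat \<Rightarrow> 'f::{finite,field}) \<Rightarrow> 'w"
    and S :: "nat \<Rightarrow> nat \<Rightarrow> (nat \<Rightarrow> 'f) \<Rightarrow> 's"
    and \<alpha> \<beta> \<theta> \<epsilon> :: real and n k d p B l m :: nat and L :: "nat set"
  assumes code: "exact_repair_code n k d \<alpha> \<beta> B W S"
    and p: "p \<in> {1..k}"
    and th0: "0 \<le> \<theta>" and th1: "\<theta> < \<beta>" and thk: "p = k \<Longrightarrow> \<theta> = 0"
    and alpha: "\<alpha> = (real d - real p + 1) * \<beta> - \<theta>"
    and eps: "\<epsilon> = Bhat k d \<alpha> \<beta> - real B"
    and L: "L \<subseteq> {1..k}" "card L = l"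
    and m: "m \<in> {1..d+1} - L"
  shows "(2 \<le> l \<and> l \<le> p \<and> p < k \<longrightarrow>
           H B (\<lambda>\<omega>. restrict (\<lambda>y. S m y \<omega>) L) \<le> \<beta> + (real l - 1) * \<theta> + real l * \<epsilon>)
       \<and> (2 \<le> l \<and> l \<le> p + 1 \<and> p + 1 < k \<longrightarrow>
           H B (\<lambda>\<omega>. restrict (\<lambda>y. S m y \<omega>) L) \<le> 2 * \<beta> - \<theta> + real l * \<epsilon>)"
proof -
  note par = c_par[OF code]
  have Ln: "L \<subseteq> {1..n}" using L par by auto
  have mn: "m \<in> {1..n}" "m \<notin> L" using m par by auto
  define eS where "eS = H B (\<lambda>\<omega>. restrict (\<lambda>y. S m y \<omega>) L)"
  define Dm where "Dm Z = H B (WS W (insert m Z)) - H B (WS W Z)" for Z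
  define D where "D Z y = H B (WS W Z) - H B (WS W (Z - {y}))" for Z y
  have gen: "eS \<le> \<alpha> + real l * ((real d + 1 - real j) * \<beta> - (bnd \<alpha> \<beta> d j + bnd \<alpha> \<beta> d (j+1) - \<epsilon>))
       + (real l - 1) * ((real d - real j) * \<beta>)"
    if j: "l \<le> j" "1 \<le> j" "j + 1 \<le> k" "1 \<le> l" for j
  proof -
    obtain Z where Z: "L \<subseteq> Z" "Z \<subseteq> {1..n}" "m \<notin> Z" "card Z = j"
      using obtain_Z[OF Ln mn(1) mn(2) L(2) j(1)] j par by auto
    have c1: "eS \<le> \<alpha> - Dm Z + (\<Sum>y\<in>L. (real d + 1 - real j) * \<beta> - D Z y)"
      unfolding eS_def Dm_def D_def by (rule core1[OF code Z(2) Z(4) mn(1) Z(3) Z(1)])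
    have c2: "Dm Z \<le> (real d - real j) * \<beta>"
      unfolding Dm_def by (rule core2[OF code Z(2) Z(4) mn(1) Z(3)])
    have c3: "\<forall>y\<in>L. D Z y \<ge> (bnd \<alpha> \<beta> d j + bnd \<alpha> \<beta> d (j+1) - \<epsilon>) - Dm Z"
    proof
      fix y assume "y \<in> L"
      then have "y \<in> Z" using Z by auto
      from core3[OF code Z(2) Z(4) mn(1) Z(3) this j(2) j(3)]
      show "D Z y \<ge> (bnd \<alpha> \<beta> d j + bnd \<alpha> \<beta> d (j+1) - \<epsilon>) - Dm Z"
        unfolding D_def Dm_def eps by linarith
    qed
    show ?thesis by (rule fin_arith[OF c1 c3 c2 L(2) j(4)])
  qed
  have bp: "\<beta> > 0" using par by auto
  show ?thesis
  proof (intro conjI impI)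
    assume h: "2 \<le> l \<and> l \<le> p \<and> p < k"
    have b1: "bnd \<alpha> \<beta> d p = \<alpha>" unfolding bnd_def alpha using th0 by auto
    have b2: "bnd \<alpha> \<beta> d (p+1) = (real d - real p) * \<beta>"
      unfolding bnd_def alpha using th1 by (auto simp: min_def algebra_simps)
    have "eS \<le> \<alpha> + real l * ((real d + 1 - real p) * \<beta> - (bnd \<alpha> \<beta> d p + bnd \<alpha> \<beta> d (p+1) - \<epsilon>))
       + (real l - 1) * ((real d - real p) * \<beta>)"
      by (rule gen) (use h p in auto)
    note X = this[unfolded b1 b2]
    show "H B (\<lambda>\<omega>. restrict (\<lambda>y. S m y \<omega>) L) \<le> \<beta> + (real l - 1) * \<theta> + real l * \<epsilon>"
      using X unfolding eS_def alpha by (simp add: algebra_simps)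
  next
    assume h: "2 \<le> l \<and> l \<le> p + 1 \<and> p + 1 < k"
    have b1: "bnd \<alpha> \<beta> d (p+1) = (real d - real p) * \<beta>"
      unfolding bnd_def alpha using th1 by (auto simp: min_def algebra_simps)
    have b2: "bnd \<alpha> \<beta> d (p+1+1) = (real d - real p - 1) * \<beta>"
      unfolding bnd_def alpha using th1 bp by (auto simp: min_def algebra_simps)
    have "eS \<le> \<alpha> + real l * ((real d + 1 - real (p+1)) * \<beta> - (bnd \<alpha> \<beta> d (p+1) + bnd \<alpha> \<beta> d (p+1+1) - \<epsilon>))
       + (real l - 1) * ((real d - real (p+1)) * \<beta>)"
      by (rule gen) (use h p in auto)
    note X = this[unfolded b1 b2]
    show "H B (\<lambda>\<omega>. restrict (\<lambda>y. S m y \<omega>) L) \<le> 2 * \<beta> - \<theta> + real l * \<epsilon>"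
      using X unfolding eS_def alpha by (simp add: algebra_simps)
  qed
qed


end
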